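(* Let $d$ be an odd positive integer. Regular 3-designs of size $n$ on $S^d$ exist when (i) $n$ is even and $n \ge 2d+2$; (ii) $n$ is odd and $n \ge 3d+2$; and (iii) $n$ is odd and $n \ge \frac{p}{p+1}(3d+3)$, where $p$ is a divisor of $n$ which is congruent to $5 \bmod 6$. In particular, there are regular 3-designs of size $n$ on $S^d$ when $n$ is an odd integer divisible by 5 with $n \ge 5(d+1)/2$.
   Context: For positive integers $n$ and $m$, $s(m) = \big(\sin(\tfrac{2\pi}{n}km)\big)_{k=1}^n$, $c(m) = \big(\cos(\tfrac{2\pi}{n}km)\big)_{k=1}^n$. A set $S$ of integers is a Sidon-type set of strength $t$ in $\mathbb{Z}_n$ if no non-trivial sum $\varepsilon_1x_1+\cdots+\varepsilon_tx_t$ with $\varepsilon_i\in\{0,\pm1\}$, $x_i \in S$ (not necessarily distinct) is $\equiv 0 \bmod n$; non-trivial means some $\varepsilon_i\ne0$ and no element appears with both coefficients $+1$ and $-1$. For $d$ odd and $e=(d+1)/2$, a regular 3-design of size $n$ on $S^d$ is the collection of the $n$ column vectors of $\sqrt{2/(d+1)}\,A(S)$, where $S=\{m_1,\dots,m_e\}$ is a set of $e$ integers forming a Sidon-type set of strength 3 in $\mathbb{Z}_n$, and $A(S)$ is the $2e\times n$ matrix with rows $s(m_1),c(m_1),\dots,s(m_e),c(m_e)$. *)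

theory Defs
  imports Complex_Main "HOL-Number_Theory.Cong"
begin

definition sidon_type :: "nat \<Rightarrow> nat \<Rightarrow> int set \<Rightarrow> bool" where
  "sidon_type n t S \<longleftrightarrow>
     (\<forall>(x :: nat \<Rightarrow> int) (\<epsilon> :: nat \<Rightarrow> int).
        (\<forall>i<t. x i \<in> S \<and> \<epsilon> i \<in> {-1, 0, 1}) \<and>
        (\<exists>i<t. \<epsilon> i \<noteq> 0) \<and>
        \<not> (\<exists>i<t. \<exists>j<t. x i = x j \<and> \<epsilon> i = 1 \<and> \<epsilon> j = -1)
        \<longrightarrow> \<not> [(\<Sum>i<t. \<epsilon> i * x i) = 0] (mod int n))"

text \<open>The columns of sqrt(2/(d+1)) A(S), where S = {m 0, ..., m (e-1)}, e = (d+1)/2.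
  Column k (k = 1..n) is the vector indexed by 0..d (= 2e-1): coordinate 2j is
  sin(2 pi k m_j / n), coordinate 2j+1 is cos(2 pi k m_j / n).\<close>
definition design_points :: "nat \<Rightarrow> nat \<Rightarrow> (nat \<Rightarrow> int) \<Rightarrow> nat \<Rightarrow> nat \<Rightarrow> real" where
  "design_points d n m k i =
     sqrt (2 / (real d + 1)) *
       (if even i then sin (2 * pi / real n * real k * real_of_int (m (i div 2)))
        else cos (2 * pi / real n * real k * real_of_int (m (i div 2))))"

definition regular_3_design :: "nat \<Rightarrow> nat \<Rightarrow> (nat \<Rightarrow> nat \<Rightarrow> real) \<Rightarrow> bool" where
  "regular_3_design d n X \<longleftrightarrow> odd d \<and>
     (\<exists>m :: nat \<Rightarrow> int. inj_on m {..<(d+1) div 2} \<and>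
        sidon_type n 3 (m ` {..<(d+1) div 2}) \<and>
        (\<forall>k\<in>{1..n}. \<forall>i\<le>d. X k i = design_points d n m k i))"

end

theory Submission
  imports Defs
begin


lemma sum3: "(\<Sum>i<(3::nat). f i) = f 0 + f 1 + (f 2::int)"
  by (simp add: eval_nat_numeral)

lemma key:
  fixes a b c r0 r1 r2 L :: int
  assumes "a = -1 \<or> a = 0 \<or> a = 1" "b = -1 \<or> b = 0 \<or> b = 1" "c = -1 \<or> c = 0 \<or> c = 1"
    and "a * r0 + b * r1 + c * r2 = 0"
    and "L \<le> r0" "r0 \<le> 2*L - 1" "L \<le> r1" "r1 \<le> 2*L - 1" "L \<le> r2" "r2 \<le> 2*L - 1" "1 \<le> L"
  shows "(a = 0 \<and> b = 0 \<and> c = 0) \<or> (a = 1 \<and> b = -1 \<and> c = 0) \<or> (a = -1 \<and> b = 1 \<and> c = 0)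
    \<or> (a = 1 \<and> c = -1 \<and> b = 0) \<or> (a = -1 \<and> c = 1 \<and> b = 0)
    \<or> (b = 1 \<and> c = -1 \<and> a = 0) \<or> (b = -1 \<and> c = 1 \<and> a = 0)"
  using assms(1-3)
  apply (elim disjE)
  using assms(4-) by simp_all
lemma key2:
  fixes a b c x0 x1 x2 :: int
  assumes "a = -1 \<or> a = 0 \<or> a = 1" "b = -1 \<or> b = 0 \<or> b = 1" "c = -1 \<or> c = 0 \<or> c = 1"
    and "a * x0 + b * x1 + c * x2 = 0" "a = 0 \<or> b = 0 \<or> c = 0"
    and "0 < x0" "0 < x1" "0 < x2"
  shows "(a = 0 \<and> b = 0 \<and> c = 0) \<or> (a = 1 \<and> b = -1 \<and> c = 0 \<and> x0 = x1) \<or> (a = -1 \<and> b = 1 \<and> c = 0 \<and> x0 = x1)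
    \<or> (a = 1 \<and> c = -1 \<and> b = 0 \<and> x0 = x2) \<or> (a = -1 \<and> c = 1 \<and> b = 0 \<and> x0 = x2)
    \<or> (b = 1 \<and> c = -1 \<and> a = 0 \<and> x1 = x2) \<or> (b = -1 \<and> c = 1 \<and> a = 0 \<and> x1 = x2)"
  using assms(1-3,5)
  apply (elim disjE)
  using assms(4,6-) by simp_all

lemma keyZ:
  fixes a b c :: int
  assumes "a = -1 \<or> a = 0 \<or> a = 1" "b = -1 \<or> b = 0 \<or> b = 1" "c = -1 \<or> c = 0 \<or> c = 1"
    and "even (a + b + c)"
  shows "a = 0 \<or> b = 0 \<or> c = 0"
  using assms(1-3)
  apply (elim disjE)
  using assms(4) by simp_all

lemma sidon_mod:
  fixes p L :: int and n :: nat and S :: "int set"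
  assumes pn: "p dvd int n" and L: "L \<ge> 1" and pL: "6*L - 2 \<le> p"
    and res: "\<forall>s\<in>S. L \<le> s mod p \<and> s mod p \<le> 2*L - 1"
    and dist: "\<forall>s\<in>S. \<forall>t\<in>S. int n dvd (s - t) \<longrightarrow> s = t"
  shows "sidon_type n 3 S"
  unfolding sidon_type_def
proof (intro allI impI notI)
  fix x \<epsilon> :: "nat \<Rightarrow> int"
  assume A: "(\<forall>i<3. x i \<in> S \<and> \<epsilon> i \<in> {-1, 0, 1}) \<and> (\<exists>i<3. \<epsilon> i \<noteq> 0) \<and>
        \<not> (\<exists>i<3. \<exists>j<3. x i = x j \<and> \<epsilon> i = 1 \<and> \<epsilon> j = -1)"
  assume C: "[(\<Sum>i<3. \<epsilon> i * x i) = 0] (mod int n)"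
  have ppos: "p > 0" using pL L by linarith
  have dv: "int n dvd \<epsilon> 0 * x 0 + \<epsilon> 1 * x 1 + \<epsilon> 2 * x 2"
    using C by (simp add: sum3 cong_0_iff)
  hence pdv: "p dvd \<epsilon> 0 * x 0 + \<epsilon> 1 * x 1 + \<epsilon> 2 * x 2" using pn dvd_trans by blast
  define r where "r i = x i mod p" for i
  define q where "q i = x i div p" for i
  have xr: "x i = p * q i + r i" for i unfolding r_def q_def by simp
  have "\<epsilon> 0 * x 0 + \<epsilon> 1 * x 1 + \<epsilon> 2 * x 2 = p * (\<epsilon> 0 * q 0 + \<epsilon> 1 * q 1 + \<epsilon> 2 * q 2)
     + (\<epsilon> 0 * r 0 + \<epsilon> 1 * r 1 + \<epsilon> 2 * r 2)"
    unfolding xr by (simp add: algebra_simps)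
  with pdv have pd: "p dvd (\<epsilon> 0 * r 0 + \<epsilon> 1 * r 1 + \<epsilon> 2 * r 2)"
    by (metis dvd_add_right_iff dvd_triv_left)
  have rb: "L \<le> r i \<and> r i \<le> 2*L - 1" if "i < 3" for i
    using res A that unfolding r_def by blast
  have e: "\<epsilon> i = -1 \<or> \<epsilon> i = 0 \<or> \<epsilon> i = 1" if "i < 3" for i using A that by blast
  have e0: "\<epsilon> 0 = -1 \<or> \<epsilon> 0 = 0 \<or> \<epsilon> 0 = 1" using e[of 0] by simp
  have e1: "\<epsilon> 1 = -1 \<or> \<epsilon> 1 = 0 \<or> \<epsilon> 1 = 1" using e[of 1] by simp
  have e2: "\<epsilon> 2 = -1 \<or> \<epsilon> 2 = 0 \<or> \<epsilon> 2 = 1" using e[of 2] by simp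
  have R0: "\<epsilon> 0 * r 0 + \<epsilon> 1 * r 1 + \<epsilon> 2 * r 2 = 0"
  proof -
    have "\<bar>\<epsilon> i * r i\<bar> \<le> 2*L - 1" if "i < 3" for i
      using e[OF that] rb[OF that] by auto
    hence b: "\<bar>\<epsilon> 0 * r 0\<bar> \<le> 2*L - 1" "\<bar>\<epsilon> 1 * r 1\<bar> \<le> 2*L - 1" "\<bar>\<epsilon> 2 * r 2\<bar> \<le> 2*L - 1" by auto
    have "\<bar>\<epsilon> 0 * r 0 + \<epsilon> 1 * r 1 + \<epsilon> 2 * r 2\<bar> < p" using pL b by linarith
    thus ?thesis using pd ppos by (metis dvd_imp_le_int abs_of_pos not_le)
  qed
  have nt: "\<not> (x i = x j \<and> \<epsilon> i = 1 \<and> \<epsilon> j = -1)" if "i<3" "j<3" for i j using A that by blast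
  have ds: "x i = x j" if "i<3" "j<3" "int n dvd x i - x j" for i j using dist A that by blast
  have ex: "\<exists>i<3. \<epsilon> i \<noteq> 0" using A by blast
  then have ex': "\<not> (\<epsilon> 0 = 0 \<and> \<epsilon> 1 = 0 \<and> \<epsilon> 2 = 0)" by (auto simp: eval_nat_numeral less_Suc_eq)

  have P: False if "\<epsilon> i = 1" "\<epsilon> j = -1" "\<epsilon> k = 0" "i<3" "j<3" "k<3"
     "\<epsilon> 0 * x 0 + \<epsilon> 1 * x 1 + \<epsilon> 2 * x 2 = x i - x j" for i j k
  proof -
    have "int n dvd x i - x j" using dv that by simp
    hence "x i = x j" using ds that by blast
    thus False using nt[of i j] that by blast
  qed
  have P01: "\<not>(\<epsilon> 0 = 1 \<and> \<epsilon> 1 = -1 \<and> \<epsilon> 2 = 0)" using P[of 0 1 2] by auto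
  have P10: "\<not>(\<epsilon> 1 = 1 \<and> \<epsilon> 0 = -1 \<and> \<epsilon> 2 = 0)" using P[of 1 0 2] by auto
  have P02: "\<not>(\<epsilon> 0 = 1 \<and> \<epsilon> 2 = -1 \<and> \<epsilon> 1 = 0)" using P[of 0 2 1] by auto
  have P20: "\<not>(\<epsilon> 2 = 1 \<and> \<epsilon> 0 = -1 \<and> \<epsilon> 1 = 0)" using P[of 2 0 1] by auto
  have P12: "\<not>(\<epsilon> 1 = 1 \<and> \<epsilon> 2 = -1 \<and> \<epsilon> 0 = 0)" using P[of 1 2 0] by auto
  have P21: "\<not>(\<epsilon> 2 = 1 \<and> \<epsilon> 1 = -1 \<and> \<epsilon> 0 = 0)" using P[of 2 1 0] by auto
  have r0: "L \<le> r 0" "r 0 \<le> 2*L-1" and r1: "L \<le> r 1" "r 1 \<le> 2*L-1" and r2: "L \<le> r 2" "r 2 \<le> 2*L-1"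
    using rb[of 0] rb[of 1] rb[of 2] by auto
  show False
    using key[OF e0 e1 e2 R0 r0 r1 r2 L] ex' P01 P10 P02 P20 P12 P21
    by argo
qed

lemma small_dvd: "int n dvd z \<Longrightarrow> - int n < z \<Longrightarrow> z < int n \<Longrightarrow> z = 0"
proof (rule ccontr)
  assume "int n dvd z" "- int n < z" "z < int n" "z \<noteq> 0"
  hence "\<bar>int n\<bar> \<le> \<bar>z\<bar>" using dvd_imp_le_int by blast
  thus False using \<open>- int n < z\<close> \<open>z < int n\<close> by linarith
qed

lemma sidon_even:
  fixes n :: nat and S :: "int set"
  assumes ev: "even n"
    and pos: "\<forall>s\<in>S. 0 < s \<and> 2 * s < int n \<and> odd s"
  shows "sidon_type n 3 S"
  unfolding sidon_type_def
proof (intro allI impI notI)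
  fix x \<epsilon> :: "nat \<Rightarrow> int"
  assume A: "(\<forall>i<3. x i \<in> S \<and> \<epsilon> i \<in> {-1, 0, 1}) \<and> (\<exists>i<3. \<epsilon> i \<noteq> 0) \<and>
        \<not> (\<exists>i<3. \<exists>j<3. x i = x j \<and> \<epsilon> i = 1 \<and> \<epsilon> j = -1)"
  assume C: "[(\<Sum>i<3. \<epsilon> i * x i) = 0] (mod int n)"
  have dv: "int n dvd \<epsilon> 0 * x 0 + \<epsilon> 1 * x 1 + \<epsilon> 2 * x 2"
    using C by (simp add: sum3 cong_0_iff)
  have "2 dvd int n" using ev by simp
  hence d2: "2 dvd \<epsilon> 0 * x 0 + \<epsilon> 1 * x 1 + \<epsilon> 2 * x 2" using dv dvd_trans by blast
  have xb: "0 < x i \<and> 2 * x i < int n \<and> odd (x i)" if "i<3" for i using A pos that by auto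
  define y where "y i = x i div 2" for i
  have y: "x i = 2 * y i + 1" if "i<3" for i using xb[OF that] unfolding y_def
    by (simp add: odd_two_times_div_two_succ)
  have "\<epsilon> 0 * x 0 + \<epsilon> 1 * x 1 + \<epsilon> 2 * x 2 = 2 * (\<epsilon> 0 * y 0 + \<epsilon> 1 * y 1 + \<epsilon> 2 * y 2)
     + (\<epsilon> 0 + \<epsilon> 1 + \<epsilon> 2)"
    using y[of 0] y[of 1] y[of 2] by (simp add: algebra_simps)
  with d2 have EV: "even (\<epsilon> 0 + \<epsilon> 1 + \<epsilon> 2)"
    by (metis dvd_add_right_iff dvd_triv_left)
  have e: "\<epsilon> i = -1 \<or> \<epsilon> i = 0 \<or> \<epsilon> i = 1" if "i < 3" for i using A that by blast
  have e0: "\<epsilon> 0 = -1 \<or> \<epsilon> 0 = 0 \<or> \<epsilon> 0 = 1" using e[of 0] by simp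
  have e1: "\<epsilon> 1 = -1 \<or> \<epsilon> 1 = 0 \<or> \<epsilon> 1 = 1" using e[of 1] by simp
  have e2: "\<epsilon> 2 = -1 \<or> \<epsilon> 2 = 0 \<or> \<epsilon> 2 = 1" using e[of 2] by simp
  have ex: "\<exists>i<3. \<epsilon> i \<noteq> 0" using A by blast
  then have ex': "\<not> (\<epsilon> 0 = 0 \<and> \<epsilon> 1 = 0 \<and> \<epsilon> 2 = 0)" by (auto simp: eval_nat_numeral less_Suc_eq)
  have nt: "\<not> (x i = x j \<and> \<epsilon> i = 1 \<and> \<epsilon> j = -1)" if "i<3" "j<3" for i j using A that by blast
  have Z: "\<epsilon> 0 = 0 \<or> \<epsilon> 1 = 0 \<or> \<epsilon> 2 = 0"
    using keyZ[OF e0 e1 e2 EV] .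
  have ab: "\<bar>\<epsilon> i * x i\<bar> \<le> x i" "\<epsilon> i = 0 \<Longrightarrow> \<bar>\<epsilon> i * x i\<bar> = 0" if "i<3" for i
    using e[OF that] xb[OF that] by auto
  have "\<bar>\<epsilon> 0 * x 0 + \<epsilon> 1 * x 1 + \<epsilon> 2 * x 2\<bar> < int n"
  proof -
    have t: "\<bar>\<epsilon> 0 * x 0 + \<epsilon> 1 * x 1 + \<epsilon> 2 * x 2\<bar> \<le> \<bar>\<epsilon> 0 * x 0\<bar> + \<bar>\<epsilon> 1 * x 1\<bar> + \<bar>\<epsilon> 2 * x 2\<bar>"
      by (metis abs_triangle_ineq add_right_mono order_trans)
    have b: "\<bar>\<epsilon> 0 * x 0\<bar> \<le> x 0" "\<bar>\<epsilon> 1 * x 1\<bar> \<le> x 1" "\<bar>\<epsilon> 2 * x 2\<bar> \<le> x 2"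
      using ab(1)[of 0] ab(1)[of 1] ab(1)[of 2] by auto
    have c: "2 * x 0 < int n" "2 * x 1 < int n" "2 * x 2 < int n" "0 < x 0" "0 < x 1" "0 < x 2"
      using xb[of 0] xb[of 1] xb[of 2] by auto
    show ?thesis using Z
    proof (elim disjE)
      assume "\<epsilon> 0 = 0" thus ?thesis using t b c by simp
    next
      assume "\<epsilon> 1 = 0" thus ?thesis using t b c by simp
    next
      assume "\<epsilon> 2 = 0" thus ?thesis using t b c by simp
    qed
  qed
  hence R0: "\<epsilon> 0 * x 0 + \<epsilon> 1 * x 1 + \<epsilon> 2 * x 2 = 0"
    using small_dvd[OF dv] by linarith
  have x0: "0 < x 0" and x1: "0 < x 1" and x2: "0 < x 2" using xb[of 0] xb[of 1] xb[of 2] by auto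
  have n01: "\<not> (x 0 = x 1 \<and> \<epsilon> 0 = 1 \<and> \<epsilon> 1 = -1)" using nt[of 0 1] by simp
  have n10: "\<not> (x 1 = x 0 \<and> \<epsilon> 1 = 1 \<and> \<epsilon> 0 = -1)" using nt[of 1 0] by simp
  have n02: "\<not> (x 0 = x 2 \<and> \<epsilon> 0 = 1 \<and> \<epsilon> 2 = -1)" using nt[of 0 2] by simp
  have n20: "\<not> (x 2 = x 0 \<and> \<epsilon> 2 = 1 \<and> \<epsilon> 0 = -1)" using nt[of 2 0] by simp
  have n12: "\<not> (x 1 = x 2 \<and> \<epsilon> 1 = 1 \<and> \<epsilon> 2 = -1)" using nt[of 1 2] by simp
  have n21: "\<not> (x 2 = x 1 \<and> \<epsilon> 2 = 1 \<and> \<epsilon> 1 = -1)" using nt[of 2 1] by simp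
  show False
    using key2[OF e0 e1 e2 R0 Z x0 x1 x2] ex' n01 n10 n02 n20 n12 n21
    by argo
qed



lemma design_from_m:
  assumes "odd d" "inj_on m {..<(d+1) div 2}" "sidon_type n 3 (m ` {..<(d+1) div 2})"
  shows "\<exists>X. regular_3_design d n X"
  unfolding regular_3_design_def using assms by blast

lemma split_unique:
  fixes a b x y p :: nat
  assumes "a < p" "b < p" "a + p * x = b + p * y"
  shows "a = b \<and> x = y"
proof -
  have "a = (a + p * x) mod p" using assms(1) by simp
  also have "\<dots> = (b + p * y) mod p" using assms(3) by simp
  also have "\<dots> = b" using assms(2) by simp
  finally have 1: "a = b" .
  have "x = (a + p * x) div p" using assms(1) by simp
  also have "\<dots> = (b + p * y) div p" using assms(3) by simp
  also have "\<dots> = y" using assms(2) by simp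
  finally show ?thesis using 1 by simp
qed

lemma case_even:
  fixes d n :: nat
  assumes "odd d" "even n" "2 * d + 2 \<le> n"
  shows "\<exists>X. regular_3_design d n X"
proof -
  define m where "m j = 2 * int j + 1" for j :: nat
  have "inj_on m {..<(d+1) div 2}" unfolding m_def by (auto simp: inj_on_def)
  moreover have "sidon_type n 3 (m ` {..<(d+1) div 2})"
  proof (rule sidon_even[OF assms(2)])
    show "\<forall>s\<in>m ` {..<(d+1) div 2}. 0 < s \<and> 2 * s < int n \<and> odd s"
    proof
      fix s assume "s \<in> m ` {..<(d+1) div 2}"
      then obtain j where j: "j < (d+1) div 2" "s = m j" by auto
      have "4 * j + 2 < 2 * d + 2" using j(1) assms(1) by (elim oddE) auto
      thus "0 < s \<and> 2 * s < int n \<and> odd s" using j assms(3) unfolding m_def by auto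
    qed
  qed
  ultimately show ?thesis using design_from_m assms(1) by blast
qed

lemma case_mod:
  fixes d n p L :: nat
  assumes d: "odd d" and pn: "p dvd n" and L: "L \<ge> 1" and pL: "6 * L \<le> p + 2"
    and e: "(d+1) div 2 \<le> L * (n div p)"
  shows "\<exists>X. regular_3_design d n X"
proof -
  define e where "e = (d+1) div 2"
  obtain q where q: "n = p * q" using pn by auto
  have ppos: "p > 0" using pL L by linarith
  have qd: "n div p = q" using q ppos by simp
  have eq: "e \<le> L * q" using e qd unfolding e_def by simp
  define m where "m j = int (L + j mod L + p * (j div L))" for j
  have Lp: "L + j mod L < p" for j
  proof -
    have "j mod L < L" using L by simp
    thus ?thesis using pL L by linarith
  qed
  have inj: "inj_on m {..<e}"
  proof (rule inj_onI)
    fix i j assume "i \<in> {..<e}" "j \<in> {..<e}" "m i = m j"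
    hence "L + i mod L + p * (i div L) = L + j mod L + p * (j div L)" unfolding m_def using of_nat_eq_iff by blast
    from split_unique[OF Lp Lp this] have "i mod L = j mod L" "i div L = j div L" by auto
    thus "i = j" by (metis div_mult_mod_eq)
  qed
  have lt: "m j < int n" if "j < e" for j
  proof -
    have "j < q * L" using that eq by (simp add: mult.commute)
    hence "j div L < q" using L by (simp add: div_less_iff_less_mult)
    hence "p * (j div L) + p \<le> p * q"
      by (metis Suc_le_eq mult_Suc_right add.commute mult_le_mono2)
    hence "L + j mod L + p * (j div L) < n" using Lp[of j] q by linarith
    thus ?thesis unfolding m_def using of_nat_less_iff by blast
  qed
  have ge: "0 \<le> m j" for j unfolding m_def by simp
  have res: "int L \<le> m j mod int p \<and> m j mod int p \<le> 2 * int L - 1" for j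
  proof -
    have "(L + j mod L + p * (j div L)) mod p = L + j mod L" using Lp[of j] by simp
    hence "m j mod int p = int (L + j mod L)" unfolding m_def by (metis of_nat_mod)
    moreover have "j mod L < L" using L by simp
    ultimately show ?thesis by simp
  qed
  have "sidon_type n 3 (m ` {..<e})"
  proof (rule sidon_mod[of "int p" n "int L"])
    show "int p dvd int n" using pn by simp
    show "1 \<le> int L" using L by simp
    show "6 * int L - 2 \<le> int p" using pL by simp
    show "\<forall>s\<in>m ` {..<e}. int L \<le> s mod int p \<and> s mod int p \<le> 2 * int L - 1" using res by auto
    show "\<forall>s\<in>m ` {..<e}. \<forall>t\<in>m ` {..<e}. int n dvd s - t \<longrightarrow> s = t"
    proof (intro ballI impI)
      fix s t assume "s \<in> m ` {..<e}" "t \<in> m ` {..<e}" "int n dvd s - t"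
      moreover from this have "0 \<le> s" "s < int n" "0 \<le> t" "t < int n" using lt ge by auto
      ultimately have "s - t = 0" using small_dvd[of n "s - t"] by linarith
      thus "s = t" by simp
    qed
  qed
  thus ?thesis using design_from_m[OF d] inj unfolding e_def by blast
qed



lemma case_p:
  fixes d n p :: nat
  assumes d: "odd d" and pn: "p dvd n" and p6: "p mod 6 = 5"
    and ineq: "real n \<ge> real p / (real p + 1) * (3 * real d + 3)"
  shows "\<exists>X. regular_3_design d n X"
proof -
  define L where "L = (p + 1) div 6"
  have L6: "6 * L = p + 1" using p6 unfolding L_def by presburger
  have L1: "L \<ge> 1" using L6 by linarith
  obtain q where q: "n = p * q" using pn by auto
  have ppos: "p > 0" using p6 by (cases p) auto
  have "real n * (real p + 1) \<ge> real p * (3 * real d + 3)"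
    using ineq by (simp add: field_simps)
  hence "real (n * (p + 1)) \<ge> real (p * (3 * d + 3))" by (simp add: algebra_simps)
  hence "n * (p + 1) \<ge> p * (3 * d + 3)" by linarith
  hence "p * (q * (p + 1)) \<ge> p * (3 * d + 3)" using q by (simp add: algebra_simps)
  hence "q * (p + 1) \<ge> 3 * d + 3" using ppos by simp
  hence "q * (6 * L) \<ge> 3 * d + 3" using L6 by simp
  moreover have "3 * d + 3 = 6 * ((d + 1) div 2)" using d by (elim oddE) auto
  ultimately have "(d + 1) div 2 \<le> L * q" by (simp add: mult.commute)
  moreover have "n div p = q" using q ppos by simp
  ultimately show ?thesis using case_mod[OF d pn L1] L6 by simp
qed

theorem proposition5p3:
  fixes d n :: nat
  assumes "odd d"
  shows "(even n \<and> n \<ge> 2 * d + 2 \<longrightarrow> (\<exists>X. regular_3_design d n X))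
    \<and> (odd n \<and> n \<ge> 3 * d + 2 \<longrightarrow> (\<exists>X. regular_3_design d n X))
    \<and> (\<forall>p::nat. odd n \<and> p dvd n \<and> p mod 6 = 5 \<and>
          real n \<ge> real p / (real p + 1) * (3 * real d + 3)
          \<longrightarrow> (\<exists>X. regular_3_design d n X))
    \<and> (odd n \<and> 5 dvd n \<and> real n \<ge> 5 * (real d + 1) / 2
          \<longrightarrow> (\<exists>X. regular_3_design d n X))"
proof (intro conjI impI allI)
  assume "even n \<and> n \<ge> 2 * d + 2"
  thus "\<exists>X. regular_3_design d n X" using case_even[OF assms] by blast
next
  assume h: "odd n \<and> n \<ge> 3 * d + 2"
  have e: "3 * d + 3 = 6 * ((d + 1) div 2)" using assms by (elim oddE) auto
  have npos: "n > 0" using h by simp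
  show "\<exists>X. regular_3_design d n X"
  proof (rule case_mod[OF assms dvd_refl, of "(d + 1) div 2"])
    show "1 \<le> (d + 1) div 2" using assms by (elim oddE) auto
    show "6 * ((d + 1) div 2) \<le> n + 2" using e h by linarith
    show "(d + 1) div 2 \<le> (d + 1) div 2 * (n div n)" using npos by simp
  qed
next
  fix p :: nat
  assume "odd n \<and> p dvd n \<and> p mod 6 = 5 \<and> real n \<ge> real p / (real p + 1) * (3 * real d + 3)"
  thus "\<exists>X. regular_3_design d n X" using case_p[OF assms] by blast
next
  assume h: "odd n \<and> 5 dvd n \<and> real n \<ge> 5 * (real d + 1) / 2"
  have "real (5::nat) / (real (5::nat) + 1) * (3 * real d + 3) = 5 * (real d + 1) / 2" by simp
  hence "real n \<ge> real (5::nat) / (real (5::nat) + 1) * (3 * real d + 3)" using h by linarith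
  thus "\<exists>X. regular_3_design d n X" using case_p[OF assms, of 5] h by simp
qed

end
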